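(* (FCN) For any $\bm{W}\in\mathbb{R}^{d\times K}$ and any fixed $\bm{u}=[\bm{u}_1^\top,\dots,\bm{u}_K^\top]^\top\in\mathbb{R}^{dK}$ with $\|\bm{u}\|_2=1$, $$\|\bm{u}^\top\nabla\ell(\bm{W};\bm{x},y)\|_{\psi_2}\le\sqrt K.$$ (CNN) There is a constant $C$ such that for any $\bm{w}\in\mathbb{R}^m$ and any fixed $\bm{u}\in\mathbb{R}^m$ with $\|\bm{u}\|_2=1$, $$\|\langle\bm{u},\nabla\ell(\bm{w};\bm{x},y)\rangle\|_{\psi_2}\le CK.$$
   Context: $\phi(x)=1/(1+e^{-x})$. FCN: $H(\bm{W},\bm{x})=\frac1K\sum_k\phi(\bm{w}_k^\top\bm{x})$ for $\bm{W}=[\bm{w}_1,\dots,\bm{w}_K]$, gradient w.r.t. $\mathrm{vec}(\bm{W})$. CNN: $d=mK$, $\bm{x}^{(k)}=(x_{m(k-1)+1},\dots,x_{mk})^\top$, $H(\bm{w},\bm{x})=\frac1K\sum_k\phi(\bm{w}^\top\bm{x}^{(k)})$. $\bm{x}\sim\mathcal{N}(\bm{0},\bm{I}_d)$, $y\in\{0,1\}$ (with $\mathbb{P}(y=1\mid\bm{x})=H(\bm{W}^\star,\bm{x})$, resp. $H(\bm{w}^\star,\bm{x})$, for some ground truth). Loss $\ell=-y\log H-(1-y)\log(1-H)$. Sub-Gaussian norm $\|X\|_{\psi_2}=\sup_{p\ge1}p^{-1/2}(\mathbb{E}|X|^p)^{1/p}$. *)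

theory Defs
  imports "HOL-Probability.Probability"
begin

definition sigmoid :: "real \<Rightarrow> real" where
  "sigmoid t = 1 / (1 + exp (- t))"

text \<open>Vectors in R^n are functions nat => real, only indices < n matter.
  A matrix W in R^(d x K) is W i k (row i < d, column k < K); column k is w_k.\<close>

definition fcn :: "nat \<Rightarrow> nat \<Rightarrow> (nat \<Rightarrow> nat \<Rightarrow> real) \<Rightarrow> (nat \<Rightarrow> real) \<Rightarrow> real" where
  "fcn d K W x = (1 / real K) * (\<Sum>k<K. sigmoid (\<Sum>i<d. W i k * x i))"

text \<open>CNN with d = m*K, patch k (0-based) is (x (m*k), ..., x (m*k + m - 1)).\<close>
definition cnn :: "nat \<Rightarrow> nat \<Rightarrow> (nat \<Rightarrow> real) \<Rightarrow> (nat \<Rightarrow> real) \<Rightarrow> real" where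
  "cnn m K w x = (1 / real K) * (\<Sum>k<K. sigmoid (\<Sum>i<m. w i * x (m * k + i)))"

definition ce_loss :: "real \<Rightarrow> bool \<Rightarrow> real" where
  "ce_loss h y = - (if y then 1 else 0) * ln h - (1 - (if y then 1 else 0)) * ln (1 - h)"

definition gauss :: "nat \<Rightarrow> (nat \<Rightarrow> real) measure" where
  "gauss d = PiM {..<d} (\<lambda>_. density lborel std_normal_density)"

text \<open>Joint law of (x,y): x ~ N(0,I_d), P(y = True | x) = Hstar x.\<close>
definition joint :: "nat \<Rightarrow> ((nat \<Rightarrow> real) \<Rightarrow> real) \<Rightarrow> ((nat \<Rightarrow> real) \<times> bool) measure" where
  "joint d Hstar = density (gauss d \<Otimes>\<^sub>M count_space UNIV)
      (\<lambda>(x, y). ennreal (if y then Hstar x else 1 - Hstar x))"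

definition enn_powr :: "ennreal \<Rightarrow> real \<Rightarrow> ennreal" where
  "enn_powr a r = (if a = \<infinity> then \<infinity> else ennreal (enn2real a powr r))"

definition psi2_norm :: "'a measure \<Rightarrow> ('a \<Rightarrow> real) \<Rightarrow> ennreal" where
  "psi2_norm M X = (SUP p\<in>{1::real..}. ennreal (p powr (-1/2)) *
      enn_powr (\<integral>\<^sup>+ \<omega>. ennreal (\<bar>X \<omega>\<bar> powr p) \<partial>M) (1 / p))"

end

theory Submission
  imports Defs
begin

lemma powr_interp:
  fixes z p th :: real and n :: nat
  assumes "0 \<le> th" "th \<le> 1" "p = th * (2*n) + (1-th) * (2*n+2)" "p > 0"
  shows "\<bar>z\<bar> powr p \<le> th * z^(2*n) + (1-th) * z^(2*n+2)"
proof (cases "z = 0")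
  case True thus ?thesis using assms by (auto simp: power_0_left)
next
  case False
  have e: "\<And>q::nat. z^(2*q) = exp (real (2*q) * ln \<bar>z\<bar>)"
  proof -
    fix q :: nat
    have "z^(2*q) = \<bar>z\<bar>^(2*q)" by (simp add: power_even_abs)
    also have "\<dots> = exp (ln \<bar>z\<bar>)^(2*q)" using False by simp
    also have "\<dots> = exp (real (2*q) * ln \<bar>z\<bar>)"
      by (rule exp_of_nat_mult[symmetric])
    finally show "z^(2*q) = exp (real (2*q) * ln \<bar>z\<bar>)" .
  qed
  have "\<bar>z\<bar> powr p = exp (p * ln \<bar>z\<bar>)" using False by (simp add: powr_def)
  also have "p * ln \<bar>z\<bar> = (1 - (1-th)) *\<^sub>R (real (2*n) * ln \<bar>z\<bar>) + (1-th) *\<^sub>R (real (2*(n+1)) * ln \<bar>z\<bar>)"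
    unfolding assms(3) by (simp add: algebra_simps)
  also have "exp \<dots> \<le> (1 - (1-th)) * exp (real (2*n) * ln \<bar>z\<bar>) + (1-th) * exp (real (2*(n+1)) * ln \<bar>z\<bar>)"
    by (rule convex_onD[OF exp_convex]) (use assms in auto)
  also have "\<dots> = th * z^(2*n) + (1-th) * z^(2*n+2)"
    using e[of n] e[of "n+1"] by simp
  finally show ?thesis .
qed

definition mom :: "nat \<Rightarrow> real" where "mom q = fact (2*q) / (2^q * fact q)"

lemma mom_Suc: "mom (Suc q) = mom q * (2*q+1)"
proof -
  have "fact (2 * Suc q) = (fact (2*q) :: real) * (2*real q+1) * (2*real q+2)"
    by (simp add: algebra_simps)
  moreover have "(2::real)^(Suc q) * fact (Suc q) = (2^q * fact q) * (2*real q+2)"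
    by (simp add: algebra_simps)
  ultimately have "mom (Suc q) = ((fact (2*q) :: real) * (2*real q+1) * (2*real q+2)) / ((2^q * fact q) * (2*real q+2))"
    unfolding mom_def by (simp only:)
  also have "\<dots> = ((fact (2*q) :: real) * (2*real q+1)) / (2^q * fact q)"
    by (rule mult_divide_mult_cancel_right) simp
  also have "\<dots> = mom q * (2*q+1)" unfolding mom_def by simp
  finally show ?thesis .
qed

lemma mom_pos: "mom q > 0" unfolding mom_def by simp

lemma mom_0: "mom 0 = 1" unfolding mom_def by simp

lemma mom_bound: "n \<ge> 2 \<Longrightarrow> mom (Suc n) \<le> (2 * real n) ^ n"
proof (induction n rule: dec_induct)
  case base
  show ?case by (simp add: mom_Suc mom_0 numeral_eq_Suc)
next
  case (step n)
  have n1: "real n \<ge> 2" using step by simp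
  have B: "2 \<le> (1 + 1 / real n) ^ n"
  proof -
    have "-1 \<le> 1 / real n" using n1 by (smt (verit) divide_nonneg_nonneg of_nat_0_le_iff)
    from Bernoulli_inequality[OF this, of n] show ?thesis using n1 by simp
  qed
  have eq: "(2 * real (Suc n)) ^ Suc n = (2*real n+2) * (2*real n)^n * (1 + 1/real n)^n"
  proof -
    have "2 * real (Suc n) = 2 * real n * (1 + 1/real n)" using n1 by (simp add: field_simps)
    hence "(2 * real (Suc n)) ^ n = (2*real n)^n * (1 + 1/real n)^n" by (simp add: power_mult_distrib)
    thus ?thesis by simp
  qed
  have "mom (Suc (Suc n)) = mom (Suc n) * (2*real n+3)" by (simp add: mom_Suc)
  also have "\<dots> \<le> (2*real n)^n * (2*real n+3)"
    using step.IH by (intro mult_right_mono) auto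
  also have "\<dots> \<le> (2*real n)^n * ((2*real n+2) * (1 + 1/real n)^n)"
  proof (intro mult_left_mono)
    have "(2*real n+2) * 2 \<le> (2*real n+2) * (1 + 1/real n)^n"
      using B by (intro mult_left_mono) auto
    thus "2*real n+3 \<le> (2*real n+2) * (1 + 1/real n)^n" by simp
  qed auto
  also have "\<dots> = (2 * real (Suc n)) ^ Suc n" using eq by (simp add: algebra_simps)
  finally show ?case .
qed

lemma mom_real_bound:
  fixes p :: real
  assumes p: "p \<ge> 1" "th = (2 * real n + 2 - p) / 2" "2 * real n \<le> p" "p < 2 * real n + 2"
  shows "th * mom n + (1 - th) * mom (Suc n) \<le> p powr (p/2)"
proof -
  have th: "0 \<le> th" "th \<le> 1" using p by auto
  consider "n = 0" | "n = 1" | "n \<ge> 2" by linarith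
  thus ?thesis
  proof cases
    case 1
    have "1 \<le> p powr (p/2)" using p by (intro ge_one_powr_ge_zero) auto
    thus ?thesis using 1 by (simp add: mom_Suc mom_0)
  next
    case 2
    have "p powr 1 \<le> p powr (p/2)" using p 2 by (intro powr_mono) auto
    moreover have "th * mom n + (1 - th) * mom (Suc n) = p - 1"
      using 2 by (simp add: p(2) mom_Suc mom_0 field_simps)
    moreover have "p powr 1 = p" using p by simp
    ultimately show ?thesis by linarith
  next
    case 3
    have "th * mom n + (1 - th) * mom (Suc n) \<le> th * mom (Suc n) + (1 - th) * mom (Suc n)"
      using th mom_pos[of n] by (intro add_right_mono mult_left_mono) (auto simp: mom_Suc)
    also have "\<dots> = mom (Suc n)" by (simp add: algebra_simps)
    also have "\<dots> \<le> (2 * real n) ^ n" using mom_bound 3 by blast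
    also have "\<dots> = (2 * real n) powr (real n)" using 3 by (simp add: powr_realpow)
    also have "\<dots> \<le> (2 * real n) powr (p/2)" using 3 p by (intro powr_mono) auto
    also have "\<dots> \<le> p powr (p/2)" using 3 p by (intro powr_mono2) auto
    finally show ?thesis .
  qed
qed

lemma std_moment:
  fixes p :: real
  assumes p: "p \<ge> 1"
  shows "(\<integral>\<^sup>+z. ennreal (std_normal_density z * \<bar>z\<bar> powr p) \<partial>lborel) \<le> ennreal (p powr (p/2))"
proof -
  define n where "n = nat \<lfloor>p/2\<rfloor>"
  have n1: "2 * real n \<le> p" "p < 2 * real n + 2" using p unfolding n_def by linarith+
  define th where "th = (2 * real n + 2 - p) / 2"
  have th: "0 \<le> th" "th \<le> 1" "p = th * (2*n) + (1-th) * (2*n+2)" using n1 unfolding th_def by (auto simp: field_simps)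
  let ?f = "\<lambda>z. std_normal_density z * (th * z^(2*n) + (1-th) * z^(2*Suc n))"
  have hb: "has_bochner_integral lborel ?f (th * mom n + (1-th) * mom (Suc n))"
  proof -
    have "has_bochner_integral lborel (\<lambda>z. th * (std_normal_density z * z^(2*n)) + (1-th) * (std_normal_density z * z^(2*Suc n))) (th * mom n + (1-th) * mom (Suc n))"
      unfolding mom_def
      by (intro has_bochner_integral_add has_bochner_integral_mult_right std_normal_moment_even)
    thus ?thesis by (simp add: algebra_simps)
  qed
  have ev: "\<And>z::real. \<And>q. 0 \<le> z^(2*q)" by (simp add: power_mult)
  have nonneg: "\<And>z. 0 \<le> ?f z" using th by (intro mult_nonneg_nonneg add_nonneg_nonneg ev) auto
  have "(\<integral>\<^sup>+z. ennreal (std_normal_density z * \<bar>z\<bar> powr p) \<partial>lborel) \<le> (\<integral>\<^sup>+z. ennreal (?f z) \<partial>lborel)"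
  proof (intro nn_integral_mono ennreal_leI mult_left_mono)
    fix z :: real
    show "\<bar>z\<bar> powr p \<le> th * z^(2*n) + (1-th) * z^(2*Suc n)"
      using powr_interp[OF th(1,2) th(3)] p by simp
  qed simp
  also have "\<dots> = ennreal (th * mom n + (1-th) * mom (Suc n))"
    using hb nonneg
    by (subst nn_integral_eq_integral) (auto simp: has_bochner_integral_iff)
  also have "\<dots> \<le> ennreal (p powr (p/2))"
    using mom_real_bound[OF p th_def n1] by (rule ennreal_leI)
  finally show ?thesis .
qed

abbreviation "Nstd \<equiv> density lborel std_normal_density"

lemma prob_Nstd: "prob_space Nstd"
  using prob_space_normal_density[of 1 0] by simp

lemma prob_gauss: "prob_space (gauss d)"
  unfolding gauss_def by (intro prob_space_PiM prob_Nstd)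

lemma gauss_indep:
  assumes "d \<ge> 1"
  shows "prob_space.indep_vars (gauss d) (\<lambda>_. Nstd) (\<lambda>i x. x i) {..<d}"
proof -
  interpret G: prob_space "gauss d" by (rule prob_gauss)
  have ne: "{..<d} \<noteq> {}" using assms by (auto simp: lessThan_empty_iff)
  have rv: "\<And>i. i \<in> {..<d} \<Longrightarrow> (\<lambda>x. x i) \<in> measurable (gauss d) Nstd"
    unfolding gauss_def by (rule measurable_component_singleton)
  have "distr (gauss d) (\<Pi>\<^sub>M i\<in>{..<d}. Nstd) (\<lambda>x. \<lambda>i\<in>{..<d}. x i) = distr (gauss d) (gauss d) (\<lambda>x. x)"
    by (rule distr_cong) (auto simp: gauss_def space_PiM)
  also have "\<dots> = gauss d" by (rule distr_id)
  also have "\<dots> = (\<Pi>\<^sub>M i\<in>{..<d}. distr (gauss d) Nstd (\<lambda>x. x i))"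
    unfolding gauss_def
    by (intro PiM_cong refl distr_PiM_component[symmetric] prob_Nstd) auto
  finally show ?thesis
    by (subst G.indep_vars_iff_distr_eq_PiM'[OF ne rv]) auto
qed

lemma gauss_lin:
  fixes c :: "nat \<Rightarrow> real" and p :: real
  assumes p: "p \<ge> 1"
  shows "(\<integral>\<^sup>+x. ennreal (\<bar>\<Sum>i<d. c i * x i\<bar> powr p) \<partial>gauss d)
           \<le> ennreal (sqrt (\<Sum>i<d. (c i)\<^sup>2) powr p * p powr (p/2))"
proof -
  interpret G: prob_space "gauss d" by (rule prob_gauss)
  define I where "I = {i. i < d \<and> c i \<noteq> 0}"
  have finI: "finite I" unfolding I_def by auto
  have sumI: "\<And>x. (\<Sum>i<d. c i * x i) = (\<Sum>i\<in>I. c i * x i)"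
    by (rule sum.mono_neutral_right) (auto simp: I_def)
  have sq: "(\<Sum>i<d. (c i)\<^sup>2) = (\<Sum>i\<in>I. (c i)\<^sup>2)"
    by (rule sum.mono_neutral_right) (auto simp: I_def)
  show ?thesis
  proof (cases "I = {}")
    case True
    thus ?thesis by (simp add: sumI)
  next
    case False
    then obtain j where j: "j \<in> I" by auto
    hence d1: "d \<ge> 1" unfolding I_def by auto
    have ind0: "G.indep_vars (\<lambda>_. Nstd) (\<lambda>i x. x i) I"
      using G.indep_vars_subset[OF gauss_indep[OF d1], of I] by (auto simp: I_def)
    have ind: "G.indep_vars (\<lambda>_. borel) (\<lambda>i x. c i * x i) I"
      by (rule G.indep_vars_compose2[OF ind0]) (simp add: measurable_cong_sets[OF sets_density refl])
    have distX: "\<And>i. i \<in> I \<Longrightarrow> distributed (gauss d) lborel (\<lambda>x. x i) std_normal_density"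
    proof -
      fix i assume i: "i \<in> I"
      hence id: "i < d" by (auto simp: I_def)
      have "distr (gauss d) lborel (\<lambda>x. x i) = distr (gauss d) Nstd (\<lambda>x. x i)"
        by (rule distr_cong) auto
      also have "\<dots> = Nstd" unfolding gauss_def
        by (rule distr_PiM_component) (use id prob_Nstd in auto)
      finally have D: "distr (gauss d) lborel (\<lambda>x. x i) = Nstd" .
      show "distributed (gauss d) lborel (\<lambda>x. x i) std_normal_density"
      proof -
        have "(\<lambda>x. x i) \<in> measurable (gauss d) Nstd"
          unfolding gauss_def using id by (intro measurable_component_singleton) auto
        moreover have "measurable (gauss d) Nstd = measurable (gauss d) lborel"
          by (rule measurable_cong_sets) auto
        ultimately show ?thesis using D
          unfolding distributed_def by auto
      qed
    qed
    have distC: "\<And>i. i \<in> I \<Longrightarrow> distributed (gauss d) lborel (\<lambda>x. c i * x i) (normal_density 0 \<bar>c i\<bar>)"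
    proof -
      fix i assume i: "i \<in> I"
      have "c i \<noteq> 0" using i by (auto simp: I_def)
      from G.normal_density_affine[OF distX[OF i] _ this, of 0]
      show "distributed (gauss d) lborel (\<lambda>x. c i * x i) (normal_density 0 \<bar>c i\<bar>)" by simp
    qed
    define s where "s = sqrt (\<Sum>i\<in>I. \<bar>c i\<bar>\<^sup>2)"
    have spos: "s > 0" unfolding s_def using finI j
      by (intro real_sqrt_gt_zero sum_pos2[of I j]) (auto simp: I_def)
    have distS: "distributed (gauss d) lborel (\<lambda>x. \<Sum>i\<in>I. c i * x i) (normal_density 0 s)"
      using G.sum_indep_normal[OF finI False ind, of "\<lambda>i. \<bar>c i\<bar>" "\<lambda>_. 0", OF _ distC]
      unfolding s_def by (auto simp: I_def)
    have distY: "distributed (gauss d) lborel (\<lambda>x. (\<Sum>i\<in>I. c i * x i) / s) std_normal_density"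
      using G.normal_standard_normal_convert[OF spos, of _ 0] distS by simp
    have measY: "(\<lambda>x. (\<Sum>i\<in>I. c i * x i) / s) \<in> borel_measurable (gauss d)"
      using distY by (simp add: distributed_def)
    have "(\<integral>\<^sup>+x. ennreal (\<bar>\<Sum>i<d. c i * x i\<bar> powr p) \<partial>gauss d)
        = (\<integral>\<^sup>+x. ennreal (s powr p) * ennreal (\<bar>(\<Sum>i\<in>I. c i * x i) / s\<bar> powr p) \<partial>gauss d)"
    proof (intro nn_integral_cong)
      fix x
      have "\<bar>\<Sum>i\<in>I. c i * x i\<bar> = s * \<bar>(\<Sum>i\<in>I. c i * x i) / s\<bar>" using spos by (simp add: abs_div)
      hence "\<bar>\<Sum>i\<in>I. c i * x i\<bar> powr p = s powr p * \<bar>(\<Sum>i\<in>I. c i * x i) / s\<bar> powr p"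
        using spos by (subst powr_mult[symmetric]) auto
      thus "ennreal (\<bar>\<Sum>i<d. c i * x i\<bar> powr p) = ennreal (s powr p) * ennreal (\<bar>(\<Sum>i\<in>I. c i * x i) / s\<bar> powr p)"
        by (simp add: sumI ennreal_mult)
    qed
    also have "\<dots> = ennreal (s powr p) * (\<integral>\<^sup>+x. ennreal (\<bar>(\<Sum>i\<in>I. c i * x i) / s\<bar> powr p) \<partial>gauss d)"
      by (rule nn_integral_cmult) (use measY in measurable)
    also have "(\<integral>\<^sup>+x. ennreal (\<bar>(\<Sum>i\<in>I. c i * x i) / s\<bar> powr p) \<partial>gauss d)
        = (\<integral>\<^sup>+z. ennreal (std_normal_density z) * ennreal (\<bar>z\<bar> powr p) \<partial>lborel)"
      by (rule distributed_nn_integral[OF distY, symmetric]) measurable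
    also have "\<dots> = (\<integral>\<^sup>+z. ennreal (std_normal_density z * \<bar>z\<bar> powr p) \<partial>lborel)"
      by (simp add: ennreal_mult)
    also have "ennreal (s powr p) * \<dots> \<le> ennreal (s powr p) * ennreal (p powr (p/2))"
      by (intro mult_left_mono std_moment p) auto
    also have "\<dots> = ennreal (sqrt (\<Sum>i<d. (c i)\<^sup>2) powr p * p powr (p/2))"
      by (simp add: ennreal_mult s_def sq)
    finally show ?thesis .
  qed
qed

lemma powr_convex0:
  fixes p :: real assumes p: "p \<ge> 1"
  shows "convex_on {0..} (\<lambda>x. x powr p)"
proof (rule convex_onI)
  fix t x y :: real assume t: "0 < t" "t < 1" and xy: "x \<in> {0..}" "y \<in> {0..}"
  have tp: "\<And>t::real. 0 < t \<Longrightarrow> t \<le> 1 \<Longrightarrow> t powr p \<le> t"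
  proof -
    fix t :: real assume "0 < t" "t \<le> 1"
    hence "t powr p \<le> t powr 1" using p by (intro powr_mono') auto
    thus "t powr p \<le> t" using \<open>0 < t\<close> by simp
  qed
  consider "x = 0" | "y = 0" | "x > 0" "y > 0" using xy by force
  thus "((1 - t) *\<^sub>R x + t *\<^sub>R y) powr p \<le> (1 - t) * x powr p + t * y powr p"
  proof cases
    case 1
    have "(t * y) powr p = t powr p * y powr p" using t xy by (simp add: powr_mult)
    also have "\<dots> \<le> t * y powr p" using tp[of t] t by (intro mult_right_mono) auto
    finally show ?thesis using 1 p by simp
  next
    case 2
    have "((1-t) * x) powr p = (1-t) powr p * x powr p" using t xy by (simp add: powr_mult)
    also have "\<dots> \<le> (1-t) * x powr p" using tp[of "1-t"] t by (intro mult_right_mono) auto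
    finally show ?thesis using 2 p by simp
  next
    case 3
    show ?thesis using convex_onD[OF powr_convex[OF p], of t x y] t 3 by auto
  qed
qed (simp add: convex_real_interval)

lemma meas_lin: "(\<lambda>x. \<Sum>i<d. c i * x i) \<in> borel_measurable (gauss d)"
proof (intro borel_measurable_sum borel_measurable_times borel_measurable_const)
  fix i assume "i \<in> {..<d}"
  hence "(\<lambda>x. x i) \<in> measurable (gauss d) Nstd"
    unfolding gauss_def by (intro measurable_component_singleton) auto
  moreover have "measurable (gauss d) Nstd = measurable (gauss d) borel"
    by (rule measurable_cong_sets) auto
  ultimately show "(\<lambda>x. x i) \<in> borel_measurable (gauss d)" by simp
qed

lemma gauss_sumabs:
  fixes c :: "nat \<Rightarrow> nat \<Rightarrow> real" and p :: real
  assumes p: "p \<ge> 1"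
  shows "(\<integral>\<^sup>+x. ennreal ((\<Sum>k<K. \<bar>\<Sum>i<d. c k i * x i\<bar>) powr p) \<partial>gauss d)
           \<le> ennreal ((\<Sum>k<K. sqrt (\<Sum>i<d. (c k i)\<^sup>2)) powr p * p powr (p/2))"
proof -
  define s where "s k = sqrt (\<Sum>i<d. (c k i)\<^sup>2)" for k
  define a where "a k x = (\<Sum>i<d. c k i * x i)" for k and x :: "nat \<Rightarrow> real"
  have s0: "\<And>k. s k \<ge> 0" unfolding s_def by (simp add: sum_nonneg)
  have a0: "\<And>k x. s k = 0 \<Longrightarrow> a k x = 0"
  proof -
    fix k x assume "s k = 0"
    hence "(\<Sum>i<d. (c k i)\<^sup>2) = 0" unfolding s_def by simp
    hence "\<forall>i\<in>{..<d}. (c k i)\<^sup>2 = 0" by (subst (asm) sum_nonneg_eq_0_iff) auto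
    thus "a k x = 0" unfolding a_def by simp
  qed
  define J where "J = {k. k < K \<and> s k \<noteq> 0}"
  define S where "S = (\<Sum>k<K. s k)"
  have finJ: "finite J" unfolding J_def by auto
  have SJ: "S = (\<Sum>k\<in>J. s k)" unfolding S_def by (rule sum.mono_neutral_right) (auto simp: J_def)
  have aJ: "\<And>x. (\<Sum>k<K. \<bar>a k x\<bar>) = (\<Sum>k\<in>J. \<bar>a k x\<bar>)"
    by (rule sum.mono_neutral_right) (auto simp: J_def a0)
  show ?thesis
  proof (cases "J = {}")
    case True
    thus ?thesis using aJ[unfolded a_def] by simp
  next
    case False
    then obtain j where j: "j \<in> J" by auto
    have spos: "\<And>k. k \<in> J \<Longrightarrow> s k > 0" using s0 unfolding J_def by (simp add: order_le_neq_trans)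
    have Spos: "S > 0" unfolding SJ using finJ j spos by (intro sum_pos2[of J j]) (auto intro: less_imp_le)
    define w where "w k = S powr (p-1) * s k powr (1-p)" for k
    have w0: "\<And>k. w k \<ge> 0" unfolding w_def by simp
    have pw: "\<And>x. (\<Sum>k<K. \<bar>a k x\<bar>) powr p \<le> (\<Sum>k\<in>J. w k * \<bar>a k x\<bar> powr p)"
    proof -
      fix x
      have "(\<Sum>k<K. \<bar>a k x\<bar>) = (\<Sum>k\<in>J. (s k / S) *\<^sub>R (S * \<bar>a k x\<bar> / s k))"
        unfolding aJ using Spos by (intro sum.cong refl) (auto dest!: spos)
      hence "(\<Sum>k<K. \<bar>a k x\<bar>) powr p \<le> (\<Sum>k\<in>J. (s k / S) * (S * \<bar>a k x\<bar> / s k) powr p)"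
        using convex_on_sum[OF finJ False powr_convex0[OF p], of "\<lambda>k. s k / S" "\<lambda>k. S * \<bar>a k x\<bar> / s k"]
          Spos spos SJ s0
        by (auto simp: sum_divide_distrib[symmetric])
      also have "\<dots> = (\<Sum>k\<in>J. w k * \<bar>a k x\<bar> powr p)"
      proof (intro sum.cong refl)
        fix k assume k: "k \<in> J"
        define P where "P = s k powr (p-1)"
        define Q where "Q = S powr (p-1)"
        define A where "A = \<bar>a k x\<bar> powr p"
        have P0: "P > 0" unfolding P_def using spos[OF k] by simp
        have e1: "(S * \<bar>a k x\<bar> / s k) powr p = S powr p * A / s k powr p"
          unfolding A_def using Spos spos[OF k] by (simp add: powr_mult powr_divide)
        have e2: "S powr p = Q * S" unfolding Q_def using Spos by (simp add: powr_diff)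
        have e3: "s k powr p = P * s k" unfolding P_def using spos[OF k] by (simp add: powr_diff)
        have e4: "s k powr (1-p) = 1 / P" unfolding P_def using spos[OF k] by (simp add: powr_diff powr_minus_divide)
        have "(s k / S) * (S * \<bar>a k x\<bar> / s k) powr p = (s k / S) * (Q * S * A / (P * s k))"
          by (simp only: e1 e2 e3)
        also have "\<dots> = Q * (1 / P) * A" using Spos spos[OF k] P0 by (simp add: field_simps)
        also have "\<dots> = w k * \<bar>a k x\<bar> powr p" unfolding w_def Q_def A_def e4 ..
        finally show "(s k / S) * (S * \<bar>a k x\<bar> / s k) powr p = w k * \<bar>a k x\<bar> powr p" .
      qed
      finally show "(\<Sum>k<K. \<bar>a k x\<bar>) powr p \<le> (\<Sum>k\<in>J. w k * \<bar>a k x\<bar> powr p)" .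
    qed
    have "(\<integral>\<^sup>+x. ennreal ((\<Sum>k<K. \<bar>\<Sum>i<d. c k i * x i\<bar>) powr p) \<partial>gauss d)
        \<le> (\<integral>\<^sup>+x. ennreal (\<Sum>k\<in>J. w k * \<bar>a k x\<bar> powr p) \<partial>gauss d)"
      by (intro nn_integral_mono ennreal_leI) (use pw in \<open>simp add: a_def\<close>)
    also have "\<dots> = (\<integral>\<^sup>+x. (\<Sum>k\<in>J. ennreal (w k) * ennreal (\<bar>a k x\<bar> powr p)) \<partial>gauss d)"
      using w0 by (intro nn_integral_cong) (simp add: ennreal_mult sum_ennreal[symmetric])
    also have "\<dots> = (\<Sum>k\<in>J. ennreal (w k) * (\<integral>\<^sup>+x. ennreal (\<bar>a k x\<bar> powr p) \<partial>gauss d))"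
    proof -
      have m: "\<And>k. a k \<in> borel_measurable (gauss d)" unfolding a_def[abs_def] by (rule meas_lin)
      show ?thesis
        by (subst nn_integral_sum) (use m in \<open>auto intro!: sum.cong nn_integral_cmult\<close>)
    qed
    also have "\<dots> \<le> (\<Sum>k\<in>J. ennreal (w k) * ennreal (s k powr p * p powr (p/2)))"
      by (intro sum_mono mult_left_mono) (use gauss_lin[OF p] in \<open>auto simp: a_def s_def\<close>)
    also have "\<dots> = ennreal (\<Sum>k\<in>J. w k * (s k powr p * p powr (p/2)))"
      using w0 by (simp add: ennreal_mult sum_ennreal[symmetric])
    also have "(\<Sum>k\<in>J. w k * (s k powr p * p powr (p/2))) = (\<Sum>k\<in>J. S powr (p-1) * p powr (p/2) * s k)"
    proof (intro sum.cong refl)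
      fix k assume k: "k \<in> J"
      have "s k powr p = s k powr (p - 1) * s k" using spos[OF k] by (simp add: powr_diff)
      moreover have "s k powr (1-p) * s k powr (p-1) = 1" using spos[OF k] by (simp add: powr_add[symmetric])
      ultimately show "w k * (s k powr p * p powr (p/2)) = S powr (p-1) * p powr (p/2) * s k"
        unfolding w_def by (simp add: algebra_simps)
    qed
    also have "\<dots> = S powr (p-1) * S * p powr (p/2)" unfolding SJ sum_distrib_left[symmetric] sum_distrib_right[symmetric] by (simp add: algebra_simps)
    also have "S powr (p-1) * S = S powr p" using Spos by (simp add: powr_diff)
    finally show ?thesis by (simp add: S_def s_def)
  qed
qed

lemma joint_int:
  fixes Hs :: "(nat \<Rightarrow> real) \<Rightarrow> real" and B :: "(nat \<Rightarrow> real) \<Rightarrow> ennreal"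
  assumes Hm: "Hs \<in> borel_measurable (gauss d)" and H01: "\<And>x. 0 \<le> Hs x \<and> Hs x \<le> 1"
    and Bm: "B \<in> borel_measurable (gauss d)"
  shows "(\<integral>\<^sup>+\<omega>. B (fst \<omega>) \<partial>joint d Hs) = (\<integral>\<^sup>+x. B x \<partial>gauss d)"
proof -
  interpret C: sigma_finite_measure "count_space (UNIV :: bool set)"
    by (rule sigma_finite_measure_count_space_finite) simp
  let ?f = "\<lambda>(x, y). ennreal (if y then Hs x else 1 - Hs x)"
  have fm: "?f \<in> borel_measurable (gauss d \<Otimes>\<^sub>M count_space UNIV)"
    using Hm by measurable
  have "(\<integral>\<^sup>+\<omega>. B (fst \<omega>) \<partial>joint d Hs) = (\<integral>\<^sup>+\<omega>. ?f \<omega> * B (fst \<omega>) \<partial>(gauss d \<Otimes>\<^sub>M count_space UNIV))"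
    unfolding joint_def by (rule nn_integral_density[OF fm]) (use Bm in measurable)
  also have "\<dots> = (\<integral>\<^sup>+x. \<integral>\<^sup>+y. ?f (x, y) * B (fst (x, y)) \<partial>count_space UNIV \<partial>gauss d)"
    by (rule C.nn_integral_fst[symmetric]) (use Bm Hm in measurable)
  also have "\<dots> = (\<integral>\<^sup>+x. B x \<partial>gauss d)"
  proof (intro nn_integral_cong)
    fix x
    have "(\<integral>\<^sup>+y. ?f (x, y) * B (fst (x, y)) \<partial>count_space UNIV) = (\<Sum>y\<in>UNIV. ?f (x, y) * B x)"
      by (subst nn_integral_count_space_finite) auto
    also have "\<dots> = (ennreal (Hs x) + ennreal (1 - Hs x)) * B x"
      by (simp add: UNIV_bool distrib_right)
    also have "ennreal (Hs x) + ennreal (1 - Hs x) = 1"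
      using H01[of x] by (subst ennreal_plus[symmetric]) auto
    finally show "(\<integral>\<^sup>+y. ?f (x, y) * B (fst (x, y)) \<partial>count_space UNIV) = B x" by simp
  qed
  finally show ?thesis .
qed

lemma psi2_bound:
  fixes Hs :: "(nat \<Rightarrow> real) \<Rightarrow> real" and g :: "(nat \<Rightarrow> real) \<times> bool \<Rightarrow> real"
    and c :: "nat \<Rightarrow> nat \<Rightarrow> real"
  assumes Hm: "Hs \<in> borel_measurable (gauss d)" and H01: "\<And>x. 0 \<le> Hs x \<and> Hs x \<le> 1"
    and gb: "\<And>x y. \<bar>g (x, y)\<bar> \<le> (\<Sum>k<K. \<bar>\<Sum>i<d. c k i * x i\<bar>)"
  shows "psi2_norm (joint d Hs) g \<le> ennreal (\<Sum>k<K. sqrt (\<Sum>i<d. (c k i)\<^sup>2))"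
  unfolding psi2_norm_def
proof (rule SUP_least)
  fix p :: real assume "p \<in> {1..}"
  hence p: "p \<ge> 1" by simp
  define S where "S = (\<Sum>k<K. sqrt (\<Sum>i<d. (c k i)\<^sup>2))"
  have S0: "S \<ge> 0" unfolding S_def by (intro sum_nonneg) (auto intro: sum_nonneg)
  define B where "B x = ennreal ((\<Sum>k<K. \<bar>\<Sum>i<d. c k i * x i\<bar>) powr p)" for x :: "nat \<Rightarrow> real"
  have Bm: "B \<in> borel_measurable (gauss d)"
  proof -
    have "(\<lambda>x. \<Sum>k<K. \<bar>\<Sum>i<d. c k i * x i\<bar>) \<in> borel_measurable (gauss d)"
      by (intro borel_measurable_sum borel_measurable_abs meas_lin)
    thus ?thesis unfolding B_def by measurable
  qed
  define I where "I = (\<integral>\<^sup>+\<omega>. ennreal (\<bar>g \<omega>\<bar> powr p) \<partial>joint d Hs)"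
  have "I \<le> (\<integral>\<^sup>+\<omega>. B (fst \<omega>) \<partial>joint d Hs)"
    unfolding I_def B_def
  proof (intro nn_integral_mono ennreal_leI)
    fix \<omega> :: "(nat \<Rightarrow> real) \<times> bool"
    obtain x y where w: "\<omega> = (x, y)" by force
    show "\<bar>g \<omega>\<bar> powr p \<le> (\<Sum>k<K. \<bar>\<Sum>i<d. c k i * fst \<omega> i\<bar>) powr p"
      unfolding w fst_conv using gb[of x y] p by (intro powr_mono2) auto
  qed
  also have "\<dots> = (\<integral>\<^sup>+x. B x \<partial>gauss d)" by (rule joint_int[OF Hm H01 Bm])
  also have "\<dots> \<le> ennreal (S powr p * p powr (p/2))"
    unfolding B_def S_def by (rule gauss_sumabs[OF p])
  finally have Ib: "I \<le> ennreal (S powr p * p powr (p/2))" .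
  hence Ifin: "I \<noteq> \<infinity>" by (auto simp: top_unique)
  have "enn2real I \<le> S powr p * p powr (p/2)"
    using Ib by (simp add: enn2real_leI)
  hence "enn2real I powr (1/p) \<le> (S powr p * p powr (p/2)) powr (1/p)"
    using p by (intro powr_mono2) auto
  also have "\<dots> = S * p powr (1/2)"
    using p S0 by (simp add: powr_mult powr_powr)
  finally have e: "enn2real I powr (1/p) \<le> S * p powr (1/2)" .
  have "ennreal (p powr (-1/2)) * enn_powr I (1/p) = ennreal (p powr (-1/2) * enn2real I powr (1/p))"
    unfolding enn_powr_def using Ifin by (simp add: ennreal_mult)
  also have "\<dots> \<le> ennreal (p powr (-1/2) * (S * p powr (1/2)))"
    using e by (intro ennreal_leI mult_left_mono) auto
  also have "p powr (-1/2) * (S * p powr (1/2)) = S"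
    using p by (simp add: powr_add[symmetric] algebra_simps)
  finally show "ennreal (p powr (-1/2)) * enn_powr (\<integral>\<^sup>+\<omega>. ennreal (\<bar>g \<omega>\<bar> powr p) \<partial>joint d Hs) (1/p) \<le> ennreal S"
    unfolding I_def .
qed

lemma sigmoid_pos: "0 < sigmoid t" and sigmoid_lt1: "sigmoid t < 1"
  unfolding sigmoid_def by (auto simp: add_pos_pos)

lemma sigmoid_deriv: "(sigmoid has_real_derivative sigmoid t * (1 - sigmoid t)) (at t)"
proof -
  have pos: "1 + exp (- t) \<noteq> 0" by (smt (verit) exp_gt_zero)
  have "((\<lambda>t. 1 / (1 + exp (- t))) has_real_derivative exp (-t) / (1 + exp (- t))^2) (at t)"
    by (rule derivative_eq_intros refl | use pos in \<open>simp add: power2_eq_square field_simps\<close>)+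
  moreover have "exp (-t) / (1 + exp (- t))^2 = sigmoid t * (1 - sigmoid t)"
    unfolding sigmoid_def using pos by (simp add: power2_eq_square field_simps)
  ultimately show ?thesis unfolding sigmoid_def[abs_def] by simp
qed

lemma sum_weight_bound:
  fixes r a :: "nat \<Rightarrow> real"
  assumes r: "\<And>k. 0 < r k \<and> r k < 1" and K: "K \<ge> 1"
  shows "(\<Sum>k<K. r k * (1 - r k) * \<bar>a k\<bar>) \<le> (\<Sum>k<K. r k) * (\<Sum>k<K. \<bar>a k\<bar>)"
proof -
  have "(\<Sum>k<K. r k * (1 - r k) * \<bar>a k\<bar>) \<le> (\<Sum>k<K. (\<Sum>j<K. r j) * \<bar>a k\<bar>)"
  proof (intro sum_mono mult_right_mono)
    fix k assume k: "k \<in> {..<K}"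
    have "r k * (1 - r k) \<le> r k" using r[of k] by (simp add: mult_left_le)
    also have "\<dots> \<le> (\<Sum>j<K. r j)" using k r by (intro member_le_sum) (auto intro: less_imp_le)
    finally show "r k * (1 - r k) \<le> (\<Sum>j<K. r j)" .
  qed auto
  thus ?thesis by (simp add: sum_distrib_left)
qed

lemma loss_deriv_bound:
  fixes z a :: "nat \<Rightarrow> real"
  assumes K: "K \<ge> 1"
  shows "\<bar>deriv (\<lambda>t. ce_loss ((1 / real K) * (\<Sum>k<K. sigmoid (z k + t * a k))) y) 0\<bar> \<le> (\<Sum>k<K. \<bar>a k\<bar>)"
proof -
  define h where "h t = (1 / real K) * (\<Sum>k<K. sigmoid (z k + t * a k))" for t
  define sg where "sg k = sigmoid (z k)" for k
  define h' where "h' = (1 / real K) * (\<Sum>k<K. sg k * (1 - sg k) * a k)"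
  define T where "T = (\<Sum>k<K. sg k)"
  have sg: "\<And>k. 0 < sg k \<and> sg k < 1" unfolding sg_def by (simp add: sigmoid_pos sigmoid_lt1)
  have Kp: "real K > 0" using K by simp
  have hd: "(h has_real_derivative h') (at 0)"
    unfolding h_def h'_def
  proof (intro DERIV_cmult DERIV_sum)
    fix k
    have "((\<lambda>t. z k + t * a k) has_real_derivative a k) (at 0)"
      by (rule derivative_eq_intros refl | simp)+
    from DERIV_chain2[OF sigmoid_deriv this]
    show "((\<lambda>t. sigmoid (z k + t * a k)) has_real_derivative sg k * (1 - sg k) * a k) (at 0)"
      by (simp add: sg_def)
  qed
  have h0: "h 0 = T / real K" unfolding h_def T_def sg_def by simp
  have Tpos: "T > 0" unfolding T_def using K sg by (intro sum_pos) (auto simp: lessThan_empty_iff)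
  have TK: "T < real K"
  proof -
    have "T < (\<Sum>k<K. 1)" unfolding T_def using K sg by (intro sum_strict_mono) (auto simp: lessThan_empty_iff)
    thus ?thesis by simp
  qed
  have h0p: "0 < h 0" and h01: "h 0 < 1" using Tpos TK Kp by (auto simp: h0)
  have sumb: "\<bar>\<Sum>k<K. sg k * (1 - sg k) * a k\<bar> \<le> (\<Sum>k<K. sg k * (1 - sg k) * \<bar>a k\<bar>)"
  proof (rule order_trans[OF sum_abs], intro sum_mono)
    fix k
    have "\<bar>sg k\<bar> = sg k" "\<bar>1 - sg k\<bar> = 1 - sg k" using sg[of k] by auto
    thus "\<bar>sg k * (1 - sg k) * a k\<bar> \<le> sg k * (1 - sg k) * \<bar>a k\<bar>" by (simp add: abs_mult)
  qed
  define Y where "Y = (if y then 1 else 0 :: real)"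
  have cd: "((\<lambda>t. ce_loss (h t) y) has_real_derivative (- Y * (h' / h 0) - (1 - Y) * (- h' / (1 - h 0)))) (at 0)"
    unfolding ce_loss_def Y_def[symmetric]
    by (rule derivative_eq_intros hd refl | use h0p h01 in \<open>simp add: field_simps\<close>)+
  have dd: "deriv (\<lambda>t. ce_loss ((1 / real K) * (\<Sum>k<K. sigmoid (z k + t * a k))) y) 0
      = - Y * (h' / h 0) - (1 - Y) * (- h' / (1 - h 0))"
    using DERIV_imp_deriv[OF cd] unfolding h_def by simp
  show ?thesis
  proof (cases y)
    case True
    have "\<bar>- Y * (h' / h 0) - (1 - Y) * (- h' / (1 - h 0))\<bar> = \<bar>\<Sum>k<K. sg k * (1 - sg k) * a k\<bar> / T"
      using True Kp Tpos unfolding Y_def h'_def h0 by (simp add: abs_mult field_simps)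
    also have "\<dots> \<le> (T * (\<Sum>k<K. \<bar>a k\<bar>)) / T"
      using order_trans[OF sumb sum_weight_bound[of sg K a, OF sg K]] Tpos unfolding T_def
      by (intro divide_right_mono) auto
    also have "\<dots> = (\<Sum>k<K. \<bar>a k\<bar>)" using Tpos by simp
    finally show ?thesis unfolding dd .
  next
    case False
    define r where "r k = 1 - sg k" for k
    have r: "\<And>k. 0 < r k \<and> r k < 1" unfolding r_def using sg by auto
    have T': "(\<Sum>k<K. r k) = real K - T" unfolding r_def T_def by (simp add: sum_subtractf)
    have T'pos: "real K - T > 0" using TK by simp
    have "\<bar>- Y * (h' / h 0) - (1 - Y) * (- h' / (1 - h 0))\<bar> = \<bar>\<Sum>k<K. sg k * (1 - sg k) * a k\<bar> / (real K - T)"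
      using False Kp T'pos unfolding Y_def h'_def h0 by (simp add: abs_mult field_simps)
    also have "\<dots> \<le> ((real K - T) * (\<Sum>k<K. \<bar>a k\<bar>)) / (real K - T)"
    proof (intro divide_right_mono)
      have "(\<Sum>k<K. sg k * (1 - sg k) * \<bar>a k\<bar>) = (\<Sum>k<K. r k * (1 - r k) * \<bar>a k\<bar>)"
        unfolding r_def by (simp add: algebra_simps)
      also have "\<dots> \<le> (real K - T) * (\<Sum>k<K. \<bar>a k\<bar>)"
        using sum_weight_bound[of r K a, OF r K] T' by simp
      finally show "\<bar>\<Sum>k<K. sg k * (1 - sg k) * a k\<bar> \<le> (real K - T) * (\<Sum>k<K. \<bar>a k\<bar>)"
        using sumb by linarith
    qed (use T'pos in auto)
    also have "\<dots> = (\<Sum>k<K. \<bar>a k\<bar>)" using T'pos by simp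
    finally show ?thesis unfolding dd .
  qed
qed

lemma avg_meas:
  "(\<lambda>x. (1 / real K) * (\<Sum>k<K. sigmoid (\<Sum>i<d. c k i * x i))) \<in> borel_measurable (gauss d)"
proof -
  have "\<And>k. (\<lambda>x. \<Sum>i<d. c k i * x i) \<in> borel_measurable (gauss d)" by (rule meas_lin)
  thus ?thesis unfolding sigmoid_def by measurable
qed

lemma avg_01:
  assumes "K \<ge> 1"
  shows "0 \<le> (1 / real K) * (\<Sum>k<K. sigmoid (f k)) \<and> (1 / real K) * (\<Sum>k<K. sigmoid (f k)) \<le> 1"
proof -
  have "(\<Sum>k<K. sigmoid (f k)) \<le> (\<Sum>k<K. 1)" by (intro sum_mono) (simp add: sigmoid_lt1 less_imp_le)
  moreover have "0 \<le> (\<Sum>k<K. sigmoid (f k))" by (intro sum_nonneg) (simp add: sigmoid_pos less_imp_le)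
  ultimately show ?thesis using assms by (auto simp: field_simps)
qed

lemma cnn_reindex:
  fixes f x :: "nat \<Rightarrow> real"
  assumes k: "k < K"
  shows "(\<Sum>i<m. f i * x (m*k+i)) = (\<Sum>i<m*K. (if m*k \<le> i \<and> i < m*k+m then f (i - m*k) else 0) * x i)"
proof -
  have sub: "{m*k..<m*k+m} \<subseteq> {..<m*K}"
  proof -
    have "m*k+m = m * Suc k" by simp
    also have "\<dots> \<le> m*K" using k by (intro mult_le_mono2) simp
    finally show ?thesis by auto
  qed
  have "(\<Sum>i<m*K. (if m*k \<le> i \<and> i < m*k+m then f (i - m*k) else 0) * x i)
      = (\<Sum>i\<in>{m*k..<m*k+m}. f (i - m*k) * x i)"
  proof -
    have "(\<Sum>i<m*K. (if m*k \<le> i \<and> i < m*k+m then f (i - m*k) else 0) * x i)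
      = (\<Sum>i\<in>{m*k..<m*k+m}. (if m*k \<le> i \<and> i < m*k+m then f (i - m*k) else 0) * x i)"
      by (rule sum.mono_neutral_right) (use sub in auto)
    also have "\<dots> = (\<Sum>i\<in>{m*k..<m*k+m}. f (i - m*k) * x i)" by (rule sum.cong) auto
    finally show ?thesis .
  qed
  also have "\<dots> = (\<Sum>i\<in>{0+m*k..<m+m*k}. f (i - m*k) * x i)" by (simp add: add.commute)
  also have "\<dots> = (\<Sum>i\<in>{0..<m}. f i * x (m*k+i))"
    by (subst sum.shift_bounds_nat_ivl) (simp add: add.commute)
  finally show ?thesis by (simp add: lessThan_atLeast0)
qed

lemma cnn_sq:
  fixes f :: "nat \<Rightarrow> real"
  assumes k: "k < K"
  shows "(\<Sum>i<m*K. ((if m*k \<le> i \<and> i < m*k+m then f (i - m*k) else 0))\<^sup>2) = (\<Sum>i<m. (f i)\<^sup>2)"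
proof -
  have "(\<Sum>i<m. (f i)\<^sup>2) = (\<Sum>i<m. (f i)\<^sup>2 * (\<lambda>_. 1) (m*k+i))" by simp
  also have "\<dots> = (\<Sum>i<m*K. (if m*k \<le> i \<and> i < m*k+m then (f (i - m*k))\<^sup>2 else 0) * 1)"
    by (rule cnn_reindex[OF k])
  finally show ?thesis by (auto intro!: sum.cong)
qed

theorem lemma11:
  shows "(\<forall>d K. d \<ge> 1 \<longrightarrow> K \<ge> 1 \<longrightarrow>
           (\<forall>(Wstar :: nat \<Rightarrow> nat \<Rightarrow> real) (W :: nat \<Rightarrow> nat \<Rightarrow> real) (u :: nat \<Rightarrow> nat \<Rightarrow> real).
              (\<Sum>k<K. \<Sum>i<d. (u i k)\<^sup>2) = 1 \<longrightarrow>
              psi2_norm (joint d (fcn d K Wstar))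
                (\<lambda>(x, y). deriv (\<lambda>t. ce_loss (fcn d K (\<lambda>i k. W i k + t * u i k) x) y) 0)
              \<le> ennreal (sqrt (real K))))
       \<and> (\<exists>C::real. \<forall>m K. m \<ge> 1 \<longrightarrow> K \<ge> 1 \<longrightarrow>
           (\<forall>(wstar :: nat \<Rightarrow> real) (w :: nat \<Rightarrow> real) (u :: nat \<Rightarrow> real).
              (\<Sum>i<m. (u i)\<^sup>2) = 1 \<longrightarrow>
              psi2_norm (joint (m * K) (cnn m K wstar))
                (\<lambda>(x, y). deriv (\<lambda>t. ce_loss (cnn m K (\<lambda>i. w i + t * u i) x) y) 0)
              \<le> ennreal (C * real K)))"
proof (intro conjI allI impI exI[of _ 1])
  fix d K :: nat and Wstar W u :: "nat \<Rightarrow> nat \<Rightarrow> real"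
  assume K: "K \<ge> 1" and u: "(\<Sum>k<K. \<Sum>i<d. (u i k)\<^sup>2) = 1"
  have Hm: "fcn d K Wstar \<in> borel_measurable (gauss d)"
    unfolding fcn_def[abs_def] using avg_meas[where c="\<lambda>k i. Wstar i k"] by simp
  have H01: "\<And>x. 0 \<le> fcn d K Wstar x \<and> fcn d K Wstar x \<le> 1"
    unfolding fcn_def by (rule avg_01[OF K])
  have eqf: "\<And>x t. fcn d K (\<lambda>i k. W i k + t * u i k) x
      = (1 / real K) * (\<Sum>k<K. sigmoid ((\<Sum>i<d. W i k * x i) + t * (\<Sum>i<d. u i k * x i)))"
    unfolding fcn_def by (simp add: distrib_right sum.distrib sum_distrib_left mult.assoc)
  have gb: "\<And>x y. \<bar>(\<lambda>(x, y). deriv (\<lambda>t. ce_loss (fcn d K (\<lambda>i k. W i k + t * u i k) x) y) 0) (x, y)\<bar>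
      \<le> (\<Sum>k<K. \<bar>\<Sum>i<d. u i k * x i\<bar>)"
    unfolding eqf case_prod_conv by (rule loss_deriv_bound[OF K])
  have "psi2_norm (joint d (fcn d K Wstar))
                (\<lambda>(x, y). deriv (\<lambda>t. ce_loss (fcn d K (\<lambda>i k. W i k + t * u i k) x) y) 0)
      \<le> ennreal (\<Sum>k<K. sqrt (\<Sum>i<d. (u i k)\<^sup>2))"
    by (rule psi2_bound[OF Hm H01 gb])
  also have "\<dots> \<le> ennreal (sqrt (real K))"
  proof (intro ennreal_leI)
    have "(\<Sum>k<K. sqrt (\<Sum>i<d. (u i k)\<^sup>2))\<^sup>2 \<le> (\<Sum>k<K. (sqrt (\<Sum>i<d. (u i k)\<^sup>2))\<^sup>2) * card {..<K}"
      by (rule sum_squared_le_sum_of_squares)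
    also have "\<dots> = real K" using u by (simp add: sum_nonneg)
    finally have "(\<Sum>k<K. sqrt (\<Sum>i<d. (u i k)\<^sup>2))\<^sup>2 \<le> real K" .
    thus "(\<Sum>k<K. sqrt (\<Sum>i<d. (u i k)\<^sup>2)) \<le> sqrt (real K)"
      by (simp add: real_le_rsqrt)
  qed
  finally show "psi2_norm (joint d (fcn d K Wstar))
                (\<lambda>(x, y). deriv (\<lambda>t. ce_loss (fcn d K (\<lambda>i k. W i k + t * u i k) x) y) 0)
              \<le> ennreal (sqrt (real K))" .
next
  fix m K :: nat and wstar w u :: "nat \<Rightarrow> real"
  assume m: "m \<ge> 1" and K: "K \<ge> 1" and u: "(\<Sum>i<m. (u i)\<^sup>2) = 1"
  define c where "c f k i = (if m*k \<le> i \<and> i < m*k+m then f (i - m*k) else 0)" for f :: "nat \<Rightarrow> real" and k i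
  have re: "\<And>f x k. k < K \<Longrightarrow> (\<Sum>i<m. f i * x (m*k+i)) = (\<Sum>i<m*K. c f k i * x i)"
    unfolding c_def by (rule cnn_reindex)
  have cnneq: "\<And>f x. cnn m K f x = (1 / real K) * (\<Sum>k<K. sigmoid (\<Sum>i<m*K. c f k i * x i))"
    unfolding cnn_def by (intro arg_cong2[where f="(*)"] refl sum.cong) (auto simp: re)
  have Hm: "cnn m K wstar \<in> borel_measurable (gauss (m*K))"
    unfolding cnneq[abs_def] by (rule avg_meas)
  have H01: "\<And>x. 0 \<le> cnn m K wstar x \<and> cnn m K wstar x \<le> 1"
    unfolding cnn_def by (rule avg_01[OF K])
  have eqf: "\<And>x t. cnn m K (\<lambda>i. w i + t * u i) x
      = (1 / real K) * (\<Sum>k<K. sigmoid ((\<Sum>i<m. w i * x (m*k+i)) + t * (\<Sum>i<m. u i * x (m*k+i))))"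
    unfolding cnn_def by (simp add: distrib_right sum.distrib sum_distrib_left mult.assoc)
  have gb: "\<And>x y. \<bar>(\<lambda>(x, y). deriv (\<lambda>t. ce_loss (cnn m K (\<lambda>i. w i + t * u i) x) y) 0) (x, y)\<bar>
      \<le> (\<Sum>k<K. \<bar>\<Sum>i<m*K. c u k i * x i\<bar>)"
  proof -
    fix x y
    have "\<bar>(\<lambda>(x, y). deriv (\<lambda>t. ce_loss (cnn m K (\<lambda>i. w i + t * u i) x) y) 0) (x, y)\<bar>
        \<le> (\<Sum>k<K. \<bar>\<Sum>i<m. u i * x (m*k+i)\<bar>)"
      unfolding eqf case_prod_conv by (rule loss_deriv_bound[OF K])
    also have "\<dots> = (\<Sum>k<K. \<bar>\<Sum>i<m*K. c u k i * x i\<bar>)"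
      by (intro sum.cong refl) (simp add: re)
    finally show "\<bar>(\<lambda>(x, y). deriv (\<lambda>t. ce_loss (cnn m K (\<lambda>i. w i + t * u i) x) y) 0) (x, y)\<bar>
      \<le> (\<Sum>k<K. \<bar>\<Sum>i<m*K. c u k i * x i\<bar>)" .
  qed
  have "psi2_norm (joint (m * K) (cnn m K wstar))
                (\<lambda>(x, y). deriv (\<lambda>t. ce_loss (cnn m K (\<lambda>i. w i + t * u i) x) y) 0)
      \<le> ennreal (\<Sum>k<K. sqrt (\<Sum>i<m*K. (c u k i)\<^sup>2))"
    by (rule psi2_bound[OF Hm H01 gb])
  also have "(\<Sum>k<K. sqrt (\<Sum>i<m*K. (c u k i)\<^sup>2)) = (\<Sum>k<K. 1)"
    by (intro sum.cong refl) (simp add: c_def cnn_sq u)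
  finally show "psi2_norm (joint (m * K) (cnn m K wstar))
                (\<lambda>(x, y). deriv (\<lambda>t. ce_loss (cnn m K (\<lambda>i. w i + t * u i) x) y) 0)
              \<le> ennreal (1 * real K)" by simp
qed

end
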